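(* Let $2\le p<\infty$. There exists a constant $c=c(p)>0$ such that for every $\xi,\eta\in\mathbb{R}^n\setminus\{0\}$, $$\langle H_{p-1}(\xi)-H_{p-1}(\eta),\xi-\eta\rangle \;\ge\; c(p)\left[\frac{(|\xi|-1)_+^{p}}{|\xi|^2}+\frac{(|\eta|-1)_+^{p}}{|\eta|^2}\right]|\xi-\eta|^2 .$$
   Context: For $\gamma>0$, $H_\gamma:\mathbb{R}^n\to\mathbb{R}^n$ is defined by $H_\gamma(\xi)=(|\xi|-1)_+^{\gamma}\,\frac{\xi}{|\xi|}$ for $\xi\neq 0$ and $H_\gamma(0)=0$, where $(s)_+=\max\{s,0\}$ and $\langle\cdot,\cdot\rangle$ is the Euclidean inner product. *)

theory Defs
  imports "HOL-Analysis.Analysis"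
begin

definition pos_part :: "real \<Rightarrow> real" where
  "pos_part s = max s 0"

text \<open>Vectors in R^n are represented as functions nat => real; only the
  coordinates i < n matter. Euclidean inner product and norm on R^n.\<close>
definition ip :: "nat \<Rightarrow> (nat \<Rightarrow> real) \<Rightarrow> (nat \<Rightarrow> real) \<Rightarrow> real" where
  "ip n x y = (\<Sum>i<n. x i * y i)"

definition enorm :: "nat \<Rightarrow> (nat \<Rightarrow> real) \<Rightarrow> real" where
  "enorm n x = sqrt (ip n x x)"

definition is_zero :: "nat \<Rightarrow> (nat \<Rightarrow> real) \<Rightarrow> bool" where
  "is_zero n x \<longleftrightarrow> (\<forall>i<n. x i = 0)"

text \<open>H_gamma(xi) = (|xi|-1)_+^gamma xi/|xi| for xi nonzero, H_gamma(0) = 0.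
  Real exponent via powr; for gamma > 0 we have 0 powr gamma = 0 as intended.\<close>
definition H :: "nat \<Rightarrow> real \<Rightarrow> (nat \<Rightarrow> real) \<Rightarrow> (nat \<Rightarrow> real)" where
  "H n \<gamma> \<xi> = (if is_zero n \<xi> then (\<lambda>_. 0)
     else (\<lambda>i. (pos_part (enorm n \<xi> - 1)) powr \<gamma> / enorm n \<xi> * \<xi> i))"

end

theory Submission
  imports Defs
begin

lemma ip_nonneg: "ip n x x \<ge> 0"
  unfolding ip_def by (intro sum_nonneg) auto

lemma ip_pos: "\<not> is_zero n x \<Longrightarrow> ip n x x > 0"
proof -
  assume "\<not> is_zero n x"
  then obtain j where j: "j < n" "x j \<noteq> 0" unfolding is_zero_def by auto
  have "0 < x j * x j" using j(2) by (metis not_real_square_gt_zero)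
  also have "\<dots> \<le> (\<Sum>i<n. x i * x i)"
    by (rule member_le_sum) (use j in auto)
  finally show ?thesis unfolding ip_def .
qed

lemma enorm_sq: "(enorm n x)\<^sup>2 = ip n x x"
  unfolding enorm_def using ip_nonneg by simp

lemma ip_expand: "ip n (\<lambda>i. \<alpha> * x i - \<beta> * y i) (\<lambda>i. x i - y i)
   = \<alpha> * ip n x x + \<beta> * ip n y y - (\<alpha> + \<beta>) * ip n x y"
  unfolding ip_def by (simp add: algebra_simps sum.distrib sum_subtractf sum_distrib_left)

lemma ip_diff: "ip n (\<lambda>i. x i - y i) (\<lambda>i. x i - y i) = ip n x x + ip n y y - 2 * ip n x y"
  unfolding ip_def by (simp add: algebra_simps sum.distrib sum_subtractf sum_distrib_left mult.commute)

definition ff :: "real \<Rightarrow> real \<Rightarrow> real" where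
  "ff p s = pos_part (s - 1) powr (p - 1) / s"

lemma ff_nonneg: "s > 0 \<Longrightarrow> ff p s \<ge> 0"
  unfolding ff_def by simp

lemma g_le_ff:
  assumes "s > 0"
  shows "pos_part (s - 1) powr p / s\<^sup>2 \<le> ff p s"
proof (cases "s \<le> 1")
  case True
  then have "pos_part (s - 1) = 0" unfolding pos_part_def by simp
  then show ?thesis unfolding ff_def by simp
next
  case False
  then have e: "pos_part (s - 1) = s - 1" unfolding pos_part_def by simp
  have "(s - 1) powr p = (s - 1) powr (p - 1) * (s - 1)"
    using False powr_add[of "s - 1" "p - 1" 1] by simp
  then have "pos_part (s - 1) powr p / s\<^sup>2 = ((s - 1) powr (p - 1) / s) * ((s - 1) / s)"
    using e by (simp add: power2_eq_square)
  also have "\<dots> \<le> ((s - 1) powr (p - 1) / s) * 1"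
    using assms False by (intro mult_left_mono) auto
  finally show ?thesis unfolding ff_def e by simp
qed

lemma ff_mono:
  assumes p: "2 \<le> p" and "0 < a" "a \<le> b"
  shows "ff p a \<le> ff p b"
proof (cases "a \<le> 1")
  case True
  then have "pos_part (a - 1) = 0" unfolding pos_part_def by simp
  then have "ff p a = 0" unfolding ff_def using p by simp
  then show ?thesis using ff_nonneg assms by simp
next
  case False
  then have ea: "pos_part (a - 1) = a - 1" and eb: "pos_part (b - 1) = b - 1"
    using assms unfolding pos_part_def by auto
  have ra: "(a - 1) powr (p - 1) = (a - 1) powr (p - 2) * (a - 1)"
    using False powr_add[of "a - 1" "p - 2" 1] by simp
  have rb: "(b - 1) powr (p - 1) = (b - 1) powr (p - 2) * (b - 1)"
    using False assms powr_add[of "b - 1" "p - 2" 1] by simp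
  have q1: "(a - 1) powr (p - 2) \<le> (b - 1) powr (p - 2)"
    using False assms p by (intro powr_mono2) auto
  have q2: "(a - 1) / a \<le> (b - 1) / b"
    using False assms by (simp add: divide_simps algebra_simps)
  have "ff p a = (a - 1) powr (p - 2) * ((a - 1) / a)"
    unfolding ff_def ea ra by simp
  also have "\<dots> \<le> (b - 1) powr (p - 2) * ((b - 1) / b)"
    using q1 q2 False by (intro mult_mono) auto
  also have "\<dots> = ff p b"
    unfolding ff_def eb rb by simp
  finally show ?thesis .
qed

lemma key_ineq:
  fixes fa fb ga gb A B T :: real
  assumes "ga \<le> fa" "gb \<le> fb" "0 \<le> ga" "0 \<le> gb" "(fa - fb) * (A - B) \<ge> 0"
    "A + B - 2 * T \<ge> 0"
  shows "fa * A + fb * B - (fa + fb) * T \<ge> 1/2 * (ga + gb) * (A + B - 2 * T)"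
proof -
  have e: "fa * A + fb * B - (fa + fb) * T = (fa + fb) / 2 * (A + B - 2 * T) + (fa - fb) * (A - B) / 2"
    by (simp add: field_simps)
  have "(ga + gb) * (A + B - 2 * T) \<le> (fa + fb) * (A + B - 2 * T)"
    using assms by (intro mult_right_mono) auto
  then show ?thesis unfolding e using assms(5) by linarith
qed

theorem lemma2p4:
  fixes p :: real
  assumes "2 \<le> p"
  shows "\<exists>c>0. \<forall>(n::nat) (\<xi>::nat \<Rightarrow> real) (\<eta>::nat \<Rightarrow> real).
    \<not> is_zero n \<xi> \<longrightarrow> \<not> is_zero n \<eta> \<longrightarrow>
    ip n (\<lambda>i. H n (p - 1) \<xi> i - H n (p - 1) \<eta> i) (\<lambda>i. \<xi> i - \<eta> i) \<ge>
      c * ((pos_part (enorm n \<xi> - 1)) powr p / (enorm n \<xi>)\<^sup>2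
         + (pos_part (enorm n \<eta> - 1)) powr p / (enorm n \<eta>)\<^sup>2)
        * (enorm n (\<lambda>i. \<xi> i - \<eta> i))\<^sup>2"
proof (intro exI[of _ "1/2"] conjI allI impI)
  fix n and x y :: "nat \<Rightarrow> real"
  assume x: "\<not> is_zero n x" and y: "\<not> is_zero n y"
  define a where "a = enorm n x"
  define b where "b = enorm n y"
  have A: "a\<^sup>2 = ip n x x" and B: "b\<^sup>2 = ip n y y" unfolding a_def b_def enorm_sq by auto
  have a0: "a > 0" unfolding a_def enorm_def using ip_pos[OF x] by simp
  have b0: "b > 0" unfolding b_def enorm_def using ip_pos[OF y] by simp
  have Hx: "H n (p - 1) x = (\<lambda>i. ff p a * x i)"
    using x unfolding H_def ff_def a_def by simp
  have Hy: "H n (p - 1) y = (\<lambda>i. ff p b * y i)"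
    using y unfolding H_def ff_def b_def by simp
  have mono: "(ff p a - ff p b) * (a\<^sup>2 - b\<^sup>2) \<ge> 0"
  proof (cases "a \<le> b")
    case True
    then have "ff p a \<le> ff p b" using ff_mono assms a0 by blast
    moreover have "a\<^sup>2 \<le> b\<^sup>2" using True a0 by (simp add: power_mono)
    ultimately show ?thesis by (simp add: mult_nonpos_nonpos)
  next
    case False
    then have "ff p b \<le> ff p a" using ff_mono assms b0 by simp
    moreover have "b\<^sup>2 \<le> a\<^sup>2" using False b0 by (simp add: power_mono)
    ultimately show ?thesis by simp
  qed
  have D: "(enorm n (\<lambda>i. x i - y i))\<^sup>2 = a\<^sup>2 + b\<^sup>2 - 2 * ip n x y"
    unfolding enorm_sq ip_diff A B ..
  have Dn: "a\<^sup>2 + b\<^sup>2 - 2 * ip n x y \<ge> 0"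
    using D[symmetric] by simp
  have "ip n (\<lambda>i. H n (p - 1) x i - H n (p - 1) y i) (\<lambda>i. x i - y i)
      = ff p a * a\<^sup>2 + ff p b * b\<^sup>2 - (ff p a + ff p b) * ip n x y"
    unfolding Hx Hy ip_expand A B ..
  also have "\<dots> \<ge> 1/2 * (pos_part (a - 1) powr p / a\<^sup>2 + pos_part (b - 1) powr p / b\<^sup>2)
      * (a\<^sup>2 + b\<^sup>2 - 2 * ip n x y)"
    by (rule key_ineq[OF g_le_ff[OF a0] g_le_ff[OF b0] _ _ mono Dn]) auto
  finally show "1/2 * (pos_part (enorm n x - 1) powr p / (enorm n x)\<^sup>2
         + pos_part (enorm n y - 1) powr p / (enorm n y)\<^sup>2)
        * (enorm n (\<lambda>i. x i - y i))\<^sup>2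
      \<le> ip n (\<lambda>i. H n (p - 1) x i - H n (p - 1) y i) (\<lambda>i. x i - y i)"
    unfolding D a_def[symmetric] b_def[symmetric] .
qed simp

end
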